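(* There is a universal constant $\alpha>0$ such that the following holds. Let $1/2<r\le1$ and $\beta_0,\beta_1>0$ with $\beta_0+\beta_1\zeta(2r)=1$, and let \[ K_1(x,y)=\beta_0+\beta_1\sum_{k=1}^\infty k^{-2r}\cos(2\pi k(x-y)),\qquad x,y\in\mathbb{T}. \] Then $K_1(x,x)=1$ for all $x\in\mathbb{T}$ and \[ K_1(x,y)\ge1-\alpha\,d_{\mathbb{T}}(x,y)^{2r-1}\quad\text{for all }x,y\in\mathbb{T}\text{ with }d_{\mathbb{T}}(x,y)\le\frac{1}{\sqrt2\,\pi}, \] i.e. the local lower bound $K_1(x,y)\ge1-\alpha\,d_{\mathbb{T}}(x,y)^p$ holds with $p=2r-1$ and $R_0=1/(\sqrt2\,\pi)$.
   Context: $\mathbb{T}=[0,1)$ is the one-dimensional torus with metric $d_{\mathbb{T}}(x,y):=\min_{k\in\{-1,0,1\}}|x-y+k|$; $\zeta$ is the Riemann zeta function. $K_1$ is the reproducing kernel of the one-dimensional Korobov space of smoothness $r$. *)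

theory Defs
  imports "HOL-Analysis.Analysis"
begin

definition zeta_real :: "real \<Rightarrow> real" where
  "zeta_real s = (\<Sum>k. 1 / (real (Suc k)) powr s)"

definition torus :: "real set" where
  "torus = {0..<1}"

definition dT :: "real \<Rightarrow> real \<Rightarrow> real" where
  "dT x y = Min {\<bar>x - y + of_int k\<bar> | k::int. k \<in> {-1, 0, 1}}"

definition K1 :: "real \<Rightarrow> real \<Rightarrow> real \<Rightarrow> real \<Rightarrow> real \<Rightarrow> real" where
  "K1 r \<beta>0 \<beta>1 x y =
     \<beta>0 + \<beta>1 * (\<Sum>k. (real (Suc k)) powr (-2*r) * cos (2 * pi * real (Suc k) * (x - y)))"

end

theory Submission
  imports Defs
begin

lemma mvt_powr:
  fixes s x :: real
  assumes s: "s > 1" and x: "x > 0"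
  shows "(x+1) powr (-s) \<le> (x powr (1-s) - (x+1) powr (1-s)) / (s-1)"
    and "(x powr (1-s) - (x+1) powr (1-s)) / (s-1) \<le> x powr (-s)"
proof -
  have D: "((\<lambda>z. z powr (1-s)) has_real_derivative (1-s) * z powr (1-s-1)) (at z)" if "x \<le> z" "z \<le> x+1" for z
  proof -
    have "z > 0" using that x by auto
    then show "((\<lambda>z. z powr (1-s)) has_real_derivative (1-s) * z powr (1-s-1)) (at z)"
      by (rule has_real_derivative_powr)
  qed
  obtain z where z: "x < z" "z < x+1"
    and eq: "(x+1) powr (1-s) - x powr (1-s) = (x+1-x) * ((1-s) * z powr (1-s-1))"
    using MVT2[of x "x+1" "\<lambda>z. z powr (1-s)", OF _ D] by auto
  have q: "(x powr (1-s) - (x+1) powr (1-s)) / (s-1) = z powr (-s)"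
    using eq s by (simp add: field_simps)
  show "(x+1) powr (-s) \<le> (x powr (1-s) - (x+1) powr (1-s)) / (s-1)"
    unfolding q using z x s by (intro powr_mono2') auto
  show "(x powr (1-s) - (x+1) powr (1-s)) / (s-1) \<le> x powr (-s)"
    unfolding q using z x s by (intro powr_mono2') auto
qed

lemma lim_powr_seq:
  fixes s :: real and N :: nat
  assumes "s > 1"
  shows "(\<lambda>n. real (n + N) powr (1-s)) \<longlonglongrightarrow> 0"
proof (rule tendsto_neg_powr)
  show "1 - s < 0" using assms by simp
  have "LIM n sequentially. real n + real N :> at_top"
    using filterlim_tendsto_add_at_top[OF tendsto_const filterlim_real_sequentially, of "real N"]
    by (simp add: add.commute)
  then show "LIM n sequentially. real (n + N) :> at_top" by simp
qed

lemma summ_powr: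
  fixes s :: real assumes "s > 1"
  shows "summable (\<lambda>k. real (Suc k) powr (-s))"
proof -
  have "summable (\<lambda>n. real n powr (-s))" using assms summable_real_powr_iff by auto
  from summable_ignore_initial_segment[OF this, of 1] show ?thesis by simp
qed

lemma summ_powr_shift:
  fixes s :: real assumes "s > 1"
  shows "summable (\<lambda>n. real (n + N + 1) powr (-s))"
proof -
  from summable_ignore_initial_segment[OF summ_powr[OF assms], of N] show ?thesis
    by (simp add: add.commute add.left_commute)
qed

lemma zeta_ge:
  fixes s :: real assumes s: "s > 1"
  shows "1/(s-1) \<le> (\<Sum>k. 1 / (real (Suc k)) powr s)"
proof -
  define g where "g n = real (n + 1) powr (1-s)" for n
  have "g \<longlonglongrightarrow> 0" unfolding g_def by (rule lim_powr_seq[OF s])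
  from sums_divide[OF telescope_sums'[OF this], of "s-1"]
  have A: "(\<lambda>n. (g n - g (Suc n)) / (s-1)) sums (1/(s-1))" by (simp add: g_def)
  have "summable (\<lambda>k. 1 / (real (Suc k)) powr s)"
    using summ_powr[OF s] by (simp add: powr_minus_divide)
  then have B: "(\<lambda>k. 1 / (real (Suc k)) powr s) sums (\<Sum>k. 1 / (real (Suc k)) powr s)"
    by (rule summable_sums)
  have C: "(g n - g (Suc n)) / (s-1) \<le> 1 / (real (Suc n)) powr s" for n
  proof -
    have "(real (Suc n) powr (1-s) - (real (Suc n)+1) powr (1-s)) / (s-1) \<le> real (Suc n) powr (-s)"
      by (rule mvt_powr(2)[OF s]) simp
    then show ?thesis by (simp add: g_def powr_minus_divide add.commute)
  qed
  show ?thesis by (rule sums_le[OF _ A B]) (use C in auto)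
qed

lemma tail_le:
  fixes s :: real assumes s: "s > 1" and N: "N \<ge> 1"
  shows "(\<Sum>n. real (n + N + 1) powr (-s)) \<le> real N powr (1-s) / (s-1)"
proof -
  define g where "g n = real (n + N) powr (1-s)" for n
  have "g \<longlonglongrightarrow> 0" unfolding g_def by (rule lim_powr_seq[OF s])
  from sums_divide[OF telescope_sums'[OF this], of "s-1"]
  have A: "(\<lambda>n. (g n - g (Suc n)) / (s-1)) sums (real N powr (1-s)/(s-1))" by (simp add: g_def)
  have B: "(\<lambda>n. real (n + N + 1) powr (-s)) sums (\<Sum>n. real (n + N + 1) powr (-s))"
    by (rule summable_sums[OF summ_powr_shift[OF s]])
  have C: "real (n + N + 1) powr (-s) \<le> (g n - g (Suc n)) / (s-1)" for n
  proof -
    have "(real (n+N)+1) powr (-s) \<le> (real (n+N) powr (1-s) - (real (n+N)+1) powr (1-s)) / (s-1)"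
      by (rule mvt_powr(1)[OF s]) (use N in simp)
    then show ?thesis by (simp add: g_def add.commute add.left_commute)
  qed
  show ?thesis by (rule sums_le[OF _ B A]) (use C in auto)
qed

lemma one_minus_cos_le: "1 - cos (x::real) \<le> x^2 / 2"
proof -
  have "cos x = cos (2 * (x/2))" by simp
  also have "\<dots> = 1 - 2 * sin (x/2) ^ 2" by (rule cos_double_sin)
  finally have e: "1 - cos x = 2 * sin (x/2) ^ 2" by simp
  have "sin (x/2) ^ 2 = \<bar>sin (x/2)\<bar> ^ 2" by simp
  also have "\<dots> \<le> \<bar>x/2\<bar> ^ 2" by (rule power_mono[OF abs_sin_x_le_abs_x]) simp
  also have "\<dots> = x^2/4" by (simp add: power2_eq_square)
  finally show ?thesis using e by simp
qed

lemma powr_sq: "(x::real) > 0 \<Longrightarrow> x powr (-s) * x^2 = x powr (2-s)"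
proof -
  assume "x > 0"
  then have "x powr (2-s) = x powr 2 * x powr (-s)" using powr_add[of x 2 "-s"] by simp
  then show ?thesis using `x > 0` by (simp add: powr_numeral)
qed

lemma pow_facts:
  fixes s d :: real assumes s: "s > 1" "s \<le> 2" and d: "d > 0" and N: "real N \<le> 1/d" "real N \<ge> 1/(2*d)"
  shows "d^2 * real N powr (3-s) \<le> d powr (s-1)"
    and "real N powr (1-s) \<le> 2 * d powr (s-1)"
proof -
  have Np: "real N > 0" using N d by (smt (verit) divide_pos_pos)
  have "real N powr (3-s) \<le> (1/d) powr (3-s)" by (rule powr_mono2) (use s Np N in auto)
  also have "\<dots> = d powr (s-3)"
  proof -
    have "d powr (s-3) = d powr (-(3-s))" by simp
    also have "\<dots> = 1 / d powr (3-s)" by (rule powr_minus_divide)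
    finally show ?thesis using d by (simp add: powr_divide)
  qed
  finally have "d^2 * real N powr (3-s) \<le> d^2 * d powr (s-3)" using d by simp
  also have "\<dots> = d powr (s-1)" using d powr_add[of d 2 "s-3"] by simp
  finally show "d^2 * real N powr (3-s) \<le> d powr (s-1)" .
  have "real N powr (1-s) \<le> (1/(2*d)) powr (1-s)" by (rule powr_mono2') (use s Np N d in auto)
  also have "\<dots> = 2 powr (s-1) * d powr (s-1)"
  proof -
    have "(1/(2*d)) powr (1-s) = 1 / (2*d) powr (1-s)"
      using d by (simp add: powr_divide)
    also have "\<dots> = (2*d) powr (-(1-s))" by (rule powr_minus_divide[symmetric])
    also have "\<dots> = (2*d) powr (s-1)" by simp
    also have "\<dots> = 2 powr (s-1) * d powr (s-1)" using d by (simp add: powr_mult)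
    finally show ?thesis .
  qed
  also have "\<dots> \<le> 2 * d powr (s-1)"
  proof -
    have "2 powr (s-1) \<le> 2 powr 1" by (rule powr_mono) (use s in auto)
    then show ?thesis by (intro mult_right_mono) auto
  qed
  finally show "real N powr (1-s) \<le> 2 * d powr (s-1)" .
qed

lemma main_bound:
  fixes s d b :: real
  assumes s: "s > 1" "s \<le> 2" and d: "d > 0" "d \<le> 1/2" and b: "0 \<le> b" "b \<le> 1" "b \<le> s-1"
  defines "a \<equiv> (\<lambda>k. real (Suc k) powr (-s) * (1 - cos (2 * pi * real (Suc k) * d)))"
  shows "summable a" "b * suminf a \<le> (2*pi^2 + 4) * d powr (s-1)"
proof -
  have a_le2: "a k \<le> 2 * real (Suc k) powr (-s)" for k
  proof -
    have "1 - cos (2 * pi * real (Suc k) * d) \<le> 2" using cos_ge_minus_one[of "2 * pi * real (Suc k) * d"] by simp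
    then show ?thesis unfolding a_def by (intro mult_left_mono[THEN order_trans[OF _ eq_refl]]) (auto simp: mult.commute)
  qed
  have a_nn: "a k \<ge> 0" for k unfolding a_def by (intro mult_nonneg_nonneg) auto
  show sa: "summable a"
    by (rule summable_comparison_test'[OF summable_mult[OF summ_powr[OF s(1)], of 2]])
       (use a_le2 a_nn in auto)
  define N where "N = nat \<lfloor>1/d\<rfloor>"
  have d1: "1/d \<ge> 2" using d by (simp add: field_simps)
  have fl0: "\<lfloor>1/d\<rfloor> \<ge> 0" using d1 d by simp
  have fl: "real N = of_int \<lfloor>1/d\<rfloor>" unfolding N_def using fl0 by simp
  have N1: "real N \<le> 1/d" unfolding fl by (rule of_int_floor_le)
  have N2: "real N \<ge> 1/d - 1" unfolding fl by linarith
  have "1/d - 1 \<ge> 1/(2*d)" using d by (simp add: field_simps)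
  then have N3: "real N \<ge> 1/(2*d)" using N2 by linarith
  have "1/(2*d) \<ge> 1" using d by (simp add: field_simps)
  then have N4: "N \<ge> 1" using N3 by linarith
  have split: "suminf a = (\<Sum>n. a (n + N)) + (\<Sum>i<N. a i)"
    by (rule suminf_split_initial_segment[OF sa])
  have "(\<Sum>n. a (n + N)) \<le> (\<Sum>n. 2 * real (n + N + 1) powr (-s))"
  proof (rule suminf_le)
    show "a (n + N) \<le> 2 * real (n + N + 1) powr (-s)" for n using a_le2[of "n+N"] by simp
    show "summable (\<lambda>n. a (n + N))" by (rule summable_ignore_initial_segment[OF sa])
    show "summable (\<lambda>n. 2 * real (n + N + 1) powr (-s))"
      by (rule summable_mult[OF summ_powr_shift[OF s(1)]])
  qed
  also have "\<dots> = 2 * (\<Sum>n. real (n + N + 1) powr (-s))"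
    by (rule suminf_mult[OF summ_powr_shift[OF s(1)]])
  also have "\<dots> \<le> 2 * (real N powr (1-s) / (s-1))"
    using tail_le[OF s(1) N4] by simp
  finally have T: "(\<Sum>n. a (n + N)) \<le> 2 * (real N powr (1-s) / (s-1))" .
  have ai: "a i \<le> 2 * pi^2 * d^2 * real N powr (2-s)" if "i < N" for i
  proof -
    let ?x = "real (Suc i)"
    have xp: "?x > 0" by simp
    have "1 - cos (2 * pi * ?x * d) \<le> (2 * pi * ?x * d)^2 / 2" by (rule one_minus_cos_le)
    then have "a i \<le> ?x powr (-s) * ((2 * pi * ?x * d)^2 / 2)"
      unfolding a_def by (intro mult_left_mono) auto
    also have "\<dots> = 2 * pi^2 * d^2 * (?x powr (-s) * ?x^2)" by (simp add: power_mult_distrib)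
    also have "\<dots> = 2 * pi^2 * d^2 * ?x powr (2-s)" using powr_sq[OF xp] by simp
    also have "\<dots> \<le> 2 * pi^2 * d^2 * real N powr (2-s)"
      by (intro mult_left_mono powr_mono2) (use that s in auto)
    finally show ?thesis .
  qed
  have "(\<Sum>i<N. a i) \<le> (\<Sum>i<N. 2 * pi^2 * d^2 * real N powr (2-s))"
    by (rule sum_mono) (use ai in auto)
  also have "\<dots> = 2 * pi^2 * (d^2 * (real N * real N powr (2-s)))" by simp
  also have "real N * real N powr (2-s) = real N powr (3-s)"
    using N4 powr_add[of "real N" 1 "2-s"] by simp
  finally have H: "(\<Sum>i<N. a i) \<le> 2 * pi^2 * (d^2 * real N powr (3-s))" .
  have P1: "d^2 * real N powr (3-s) \<le> d powr (s-1)" and P2: "real N powr (1-s) \<le> 2 * d powr (s-1)"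
    using pow_facts[OF s d(1) N1 N3] by auto
  have Hn: "(\<Sum>i<N. a i) \<ge> 0" by (rule sum_nonneg) (use a_nn in auto)
  have Tn: "(\<Sum>n. a (n + N)) \<ge> 0" by (rule suminf_nonneg[OF summable_ignore_initial_segment[OF sa]]) (use a_nn in auto)
  have "b * (\<Sum>i<N. a i) \<le> 1 * (2 * pi^2 * d powr (s-1))"
    using H P1 Hn b by (intro mult_mono) (auto intro: order_trans)
  moreover have "b * (\<Sum>n. a (n + N)) \<le> (s-1) * (2 * (real N powr (1-s) / (s-1)))"
    using T Tn b by (intro mult_mono) auto
  moreover have "(s-1) * (2 * (real N powr (1-s) / (s-1))) = 2 * real N powr (1-s)" using s by simp
  ultimately have "b * suminf a \<le> 2 * pi^2 * d powr (s-1) + 2 * (2 * d powr (s-1))"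
    unfolding split using P2 by (simp add: distrib_left)
  then show "b * suminf a \<le> (2*pi^2 + 4) * d powr (s-1)" by (simp add: algebra_simps)
qed

lemma dT_repr: "\<exists>m::int. dT x y = \<bar>x - y + of_int m\<bar>"
proof -
  have e: "{\<bar>x - y + of_int k\<bar> | k::int. k \<in> {-1, 0, 1}} = (\<lambda>k. \<bar>x - y + of_int k\<bar>) ` {-1,0,1::int}"
    apply auto
      apply (rule exI[of _ "-1"], simp)
     apply (rule exI[of _ 0], simp)
    apply (rule exI[of _ 1], simp)
    done
  have "dT x y \<in> (\<lambda>k. \<bar>x - y + of_int k\<bar>) ` {-1,0,1::int}"
    unfolding dT_def e by (rule Min_in) auto
  then obtain k::int where "dT x y = \<bar>x - y + of_int k\<bar>" by blast
  then show ?thesis by blast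
qed

lemma dT_nonneg: "dT x y \<ge> 0"
  using dT_repr[of x y] by auto

lemma cos_shift: "cos (2 * pi * real n * (x - y)) = cos (2 * pi * real n * dT x y)"
proof -
  obtain m where m: "dT x y = \<bar>x - y + of_int m\<bar>" using dT_repr by blast
  define e where "e = x - y + of_int m"
  have "2 * pi * real n * (x - y) = 2 * pi * real n * e - (2 * pi) * of_int (int n * m)"
    unfolding e_def by (simp add: algebra_simps)
  then have "cos (2 * pi * real n * (x - y)) = cos (2 * pi * real n * e)"
    by (simp only: cos_diff cos_int_2pin sin_int_2pin)
  also have "\<dots> = cos (2 * pi * real n * \<bar>e\<bar>)"
  proof (cases "e \<ge> 0")
    case False
    then have "2 * pi * real n * \<bar>e\<bar> = - (2 * pi * real n * e)" by simp
    then show ?thesis by (simp only: cos_minus)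
  qed simp
  finally show ?thesis unfolding m e_def .
qed

theorem lemma3p5:
  "\<exists>\<alpha>::real. \<alpha> > 0 \<and>
     (\<forall>r \<beta>0 \<beta>1::real. 1/2 < r \<and> r \<le> 1 \<and> \<beta>0 > 0 \<and> \<beta>1 > 0 \<and>
        \<beta>0 + \<beta>1 * zeta_real (2*r) = 1 \<longrightarrow>
        (\<forall>x\<in>torus. K1 r \<beta>0 \<beta>1 x x = 1) \<and>
        (\<forall>x\<in>torus. \<forall>y\<in>torus. dT x y \<le> 1 / (sqrt 2 * pi) \<longrightarrow>
            K1 r \<beta>0 \<beta>1 x y \<ge> 1 - \<alpha> * dT x y powr (2*r - 1)))"
proof (intro exI[of _ "2*pi^2 + 4"] conjI allI impI ballI)
  show "0 < 2*pi^2 + (4::real)" by (simp add: add_pos_pos)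
  fix r \<beta>0 \<beta>1 :: real
  assume H: "1/2 < r \<and> r \<le> 1 \<and> \<beta>0 > 0 \<and> \<beta>1 > 0 \<and> \<beta>0 + \<beta>1 * zeta_real (2*r) = 1"
  define s where "s = 2*r"
  have s: "s > 1" "s \<le> 2" using H by (auto simp: s_def)
  have zeq: "zeta_real s = (\<Sum>k. real (Suc k) powr (-s))"
    unfolding zeta_real_def by (simp add: powr_minus_divide)
  have zs: "summable (\<lambda>k. real (Suc k) powr (-s))" by (rule summ_powr[OF s(1)])
  have zge: "1/(s-1) \<le> zeta_real s" unfolding zeta_real_def by (rule zeta_ge[OF s(1)])
  have K1eq: "K1 r \<beta>0 \<beta>1 x y = \<beta>0 + \<beta>1 * (\<Sum>k. real (Suc k) powr (-s) * cos (2 * pi * real (Suc k) * dT x y))" for x y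
    unfolding K1_def s_def using cos_shift[of "Suc k" x y for k] by (simp only:) simp
  have one: "\<beta>0 + \<beta>1 * zeta_real s = 1" using H s_def by simp
  show "K1 r \<beta>0 \<beta>1 x x = 1" for x
    unfolding K1_def using one zeq s_def by simp
  fix x y assume "x \<in> torus" "y \<in> torus" and dle: "dT x y \<le> 1 / (sqrt 2 * pi)"
  define d where "d = dT x y"
  define a where "a = (\<lambda>k. real (Suc k) powr (-s) * (1 - cos (2 * pi * real (Suc k) * d)))"
  have K: "K1 r \<beta>0 \<beta>1 x y = 1 - \<beta>1 * suminf a" if sa: "summable a"
  proof -
    have "(\<Sum>k. real (Suc k) powr (-s) * cos (2 * pi * real (Suc k) * d))
        = (\<Sum>k. real (Suc k) powr (-s) - a k)" unfolding a_def by (simp add: algebra_simps)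
    also have "\<dots> = zeta_real s - suminf a" unfolding zeq by (rule suminf_diff[OF zs sa, symmetric])
    finally have S: "(\<Sum>k. real (Suc k) powr (-s) * cos (2 * pi * real (Suc k) * d)) = zeta_real s - suminf a" .
    have "K1 r \<beta>0 \<beta>1 x y = \<beta>0 + \<beta>1 * (zeta_real s - suminf a)"
      unfolding K1eq d_def[symmetric] S ..
    also have "\<dots> = (\<beta>0 + \<beta>1 * zeta_real s) - \<beta>1 * suminf a" by (simp add: right_diff_distrib)
    finally show ?thesis using one by simp
  qed
  have "sqrt 2 * pi \<ge> 1 * 3" using pi_gt3 by (intro mult_mono) auto
  then have "1 / (sqrt 2 * pi) \<le> 1/2" by (simp add: field_simps)
  then have d: "d \<le> 1/2" "d \<ge> 0" using dle dT_nonneg[of x y] unfolding d_def by linarith+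
  show "K1 r \<beta>0 \<beta>1 x y \<ge> 1 - (2*pi^2 + 4) * dT x y powr (2*r - 1)"
  proof (cases "d = 0")
    case True
    then have a0: "a = (\<lambda>k. 0)" unfolding a_def by auto
    then have "summable a" by simp
    from K[OF this] a0 have "K1 r \<beta>0 \<beta>1 x y = 1" by simp
    moreover have "dT x y powr (2*r - 1) = 0" using True unfolding d_def by simp
    ultimately show ?thesis by simp
  next
    case False
    then have dp: "d > 0" using d by auto
    have b1: "\<beta>1 * zeta_real s < 1" using one H by linarith
    have "\<beta>1 * (1/(s-1)) \<le> \<beta>1 * zeta_real s"
      by (rule mult_left_mono[OF zge]) (use H in auto)
    then have "\<beta>1 * (1/(s-1)) < 1" using b1 by linarith
    then have bs: "\<beta>1 \<le> s - 1" using s by (simp add: field_simps)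
    have b0: "0 \<le> \<beta>1" "\<beta>1 \<le> 1" using H bs s by auto
    have sa: "summable a" unfolding a_def by (rule main_bound(1)[OF s dp d(1) b0 bs])
    have B: "\<beta>1 * suminf a \<le> (2*pi^2 + 4) * d powr (s-1)"
      unfolding a_def by (rule main_bound(2)[OF s dp d(1) b0 bs])
    have e: "d powr (s-1) = dT x y powr (2*r-1)" by (simp add: d_def s_def)
    show ?thesis using K[OF sa] B unfolding e by linarith
  qed
qed

end
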